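(* Let $\mathcal{G}=(V,E_L,E_R)$ be an achievement positional game and let $u,v\in V$ with $\{u\},\{v\}\notin E_L\cup E_R$, such that for every $e\in E_L\cup E_R$, $u\in e$ implies $v\in e$. Then: (i) $o(\mathcal{G}_u)\le_L o(\mathcal{G}_v)$; (ii) $o(\mathcal{G}^v)\le_L o(\mathcal{G}^u)$; (iii) if $u \neq v$, then $o(\mathcal{G}_u^v)\le_L o(\mathcal{G})\le_L o(\mathcal{G}_v^u)$.
   Context: A hypergraph is a pair $(V,E)$ with $V$ finite and $E\subseteq 2^V\setminus\{\varnothing\}$. An achievement positional game is a triple $\mathcal{G}=(V,E_L,E_R)$ where $(V,E_L)$ and $(V,E_R)$ are hypergraphs; elements of $E_L$ are blue edges, elements of $E_R$ are red edges. Two players, Left and Right, alternately pick a previously unpicked vertex of $V$ (either player may be designated to start). A player fills an edge when they have picked all its vertices. If Left fills a blue edge before Right fills a red edge, Left wins; if Right fills a red edge before Left fills a blue edge, Right wins; if neither happens before all vertices are picked, the game is a draw. For a set of edges $E$ and a set of vertices $S$, let $E^{+S}=\{e\setminus S : e\in E\}$ and $E^{-S}=\{e\in E : e\cap S=\varnothing\}$. If Left has picked the set $V_L$ and Right the set $V_R$, the updated game is $\mathcal{G}_{V_L}^{V_R}=(V\setminus(V_L\cup V_R),\,E_L^{+V_L-V_R},\,E_R^{+V_R-V_L})$; singleton brackets and empty sub/superscripts are omitted (so $\mathcal{G}_u$: Left picked $u$; $\mathcal{G}^v$: Right picked $v$; $\mathcal{G}_u^v$: Left picked $u$ and Right picked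 $v$). The outcome $o(\mathcal{G})$ is the pair (result under optimal play when Left starts, result under optimal play when Right starts). The partial order $\le_L$ on outcomes is the componentwise order, where in each component results are ordered Right wins $<$ draw $<$ Left wins. *)

theory Defs
  imports Main
begin

datatype result = RightWins | Draw | LeftWins

fun rank :: "result \<Rightarrow> nat" where
  "rank RightWins = 0" | "rank Draw = 1" | "rank LeftWins = 2"

instantiation result :: linorder
begin
definition less_eq_result :: "result \<Rightarrow> result \<Rightarrow> bool" where
  "less_eq_result a b \<longleftrightarrow> rank a \<le> rank b"
definition less_result :: "result \<Rightarrow> result \<Rightarrow> bool" where
  "less_result a b \<longleftrightarrow> rank a < rank b"
instance
proof
  fix x y z :: result
  show "x \<le> y \<Longrightarrow> y \<le> x \<Longrightarrow> x = y"
    by (cases x; cases y) (auto simp: less_eq_result_def)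
qed (auto simp: less_eq_result_def less_result_def)
end

type_synonym 'a game = "'a set \<times> 'a set set \<times> 'a set set"

definition hypergraph :: "'a set \<Rightarrow> 'a set set \<Rightarrow> bool" where
  "hypergraph V E \<longleftrightarrow> finite V \<and> (\<forall>e\<in>E. e \<subseteq> V \<and> e \<noteq> {})"

definition achievement_game :: "'a game \<Rightarrow> bool" where
  "achievement_game G = (case G of (V, EL, ER) \<Rightarrow> hypergraph V EL \<and> hypergraph V ER)"

definition eplus :: "'a set set \<Rightarrow> 'a set \<Rightarrow> 'a set set" where
  "eplus E S = (\<lambda>e. e - S) ` E"
definition eminus :: "'a set set \<Rightarrow> 'a set \<Rightarrow> 'a set set" where
  "eminus E S = {e \<in> E. e \<inter> S = {}}"

text \<open>Updated game G_{V_L}^{V_R}: Left picked VL, Right picked VR.\<close>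
definition upd :: "'a game \<Rightarrow> 'a set \<Rightarrow> 'a set \<Rightarrow> 'a game" where
  "upd G VL VR = (case G of (V, EL, ER) \<Rightarrow>
     (V - (VL \<union> VR), eminus (eplus EL VL) VR, eminus (eplus ER VR) VL))"

text \<open>Value of the game under optimal play, with fuel n (= number of remaining vertices).
  The boolean says whether Left is to move. A player who picks x fills an edge iff
  the (updated) edge set of that player contains {x}.\<close>
fun val :: "nat \<Rightarrow> bool \<Rightarrow> 'a game \<Rightarrow> result" where
  "val 0 p G = Draw"
| "val (Suc n) True (V, EL, ER) =
     (if V = {} then Draw else
       Max ((\<lambda>x. if {x} \<in> EL then LeftWins else val n False (upd (V, EL, ER) {x} {})) ` V))"
| "val (Suc n) False (V, EL, ER) =
     (if V = {} then Draw else
       Min ((\<lambda>x. if {x} \<in> ER then RightWins else val n True (upd (V, EL, ER) {} {x})) ` V))"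

text \<open>Outcome: (result when Left starts, result when Right starts).\<close>
definition outcome :: "'a game \<Rightarrow> result \<times> result" where
  "outcome G = (val (card (fst G)) True G, val (card (fst G)) False G)"

definition le_L :: "result \<times> result \<Rightarrow> result \<times> result \<Rightarrow> bool" where
  "le_L a b \<longleftrightarrow> fst a \<le> fst b \<and> snd a \<le> snd b"

end

theory Submission
  imports Defs
begin


lemma upd_simp: "upd (V,EL,ER) A B = (V - (A \<union> B), eminus (eplus EL A) B, eminus (eplus ER B) A)"
  by (simp add: upd_def)
lemma eminus_empty[simp]: "eminus E {} = E" by (simp add: eminus_def)
lemma eplus_empty[simp]: "eplus E {} = E" by (simp add: eplus_def)
lemma mem_eplus: "x \<in> eplus E S \<longleftrightarrow> (\<exists>e\<in>E. x = e - S)" by (auto simp: eplus_def)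
lemma mem_eminus: "x \<in> eminus E S \<longleftrightarrow> x \<in> E \<and> x \<inter> S = {}" by (auto simp: eminus_def)

lemma le_LeftWins[simp]: "r \<le> LeftWins" by (cases r) (simp_all add: less_eq_result_def)
lemma RightWins_le[simp]: "RightWins \<le> r" by (cases r) (simp_all add: less_eq_result_def)

lemma edges_upd: "C \<inter> B = {} \<Longrightarrow> eminus (eplus (eminus (eplus E A) B) C) D = eminus (eplus E (A \<union> C)) (B \<union> D)"
proof (rule set_eqI)
  fix x assume CB: "C \<inter> B = {}"
  show "x \<in> eminus (eplus (eminus (eplus E A) B) C) D \<longleftrightarrow> x \<in> eminus (eplus E (A \<union> C)) (B \<union> D)"
  proof
    assume "x \<in> eminus (eplus (eminus (eplus E A) B) C) D"
    then obtain e where "e \<in> E" "(e - A) \<inter> B = {}" "x = e - A - C" "x \<inter> D = {}"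
      by (auto simp: mem_eplus mem_eminus)
    then show "x \<in> eminus (eplus E (A \<union> C)) (B \<union> D)"
      by (auto simp: mem_eplus mem_eminus Diff_Un)
  next
    assume "x \<in> eminus (eplus E (A \<union> C)) (B \<union> D)"
    then obtain e where "e \<in> E" "x = e - (A \<union> C)" "x \<inter> (B \<union> D) = {}"
      by (auto simp: mem_eplus mem_eminus)
    moreover have "(e - A) \<inter> B = {}" using calculation CB by blast
    ultimately have "e - A \<in> eminus (eplus E A) B" by (auto simp: mem_eminus mem_eplus)
    moreover have "x = (e - A) - C" using \<open>x = e - (A \<union> C)\<close> by blast
    ultimately have "x \<in> eplus (eminus (eplus E A) B) C" by (auto simp: mem_eplus)
    then show "x \<in> eminus (eplus (eminus (eplus E A) B) C) D"
      using \<open>x \<inter> (B \<union> D) = {}\<close> by (auto simp: mem_eminus)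
  qed
qed

lemma upd_upd: "(A \<union> C) \<inter> (B \<union> D) = {} \<Longrightarrow> upd (upd (V,EL,ER) A B) C D = upd (V,EL,ER) (A \<union> C) (B \<union> D)"
proof -
  assume h: "(A \<union> C) \<inter> (B \<union> D) = {}"
  have 1: "eminus (eplus (eminus (eplus EL A) B) C) D = eminus (eplus EL (A \<union> C)) (B \<union> D)"
    by (rule edges_upd) (use h in blast)
  have 2: "eminus (eplus (eminus (eplus ER B) A) D) C = eminus (eplus ER (B \<union> D)) (A \<union> C)"
    by (rule edges_upd) (use h in blast)
  have 3: "V - (A \<union> B) - (C \<union> D) = V - (A \<union> C \<union> (B \<union> D))" by blast
  show ?thesis unfolding upd_simp 1 2 3 by simp
qed

lemma bij_remove: "bij_betw \<sigma> V V' \<Longrightarrow> x \<in> V \<Longrightarrow> bij_betw \<sigma> (V - {x}) (V' - {\<sigma> x})"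
  by (auto simp: bij_betw_def inj_on_def)

definition w :: "bool \<Rightarrow> 'a game \<Rightarrow> result" where
  "w p G = val (card (fst G)) p G"

lemma val_fuel: "finite V \<Longrightarrow> card V \<le> n \<Longrightarrow> val n p (V,EL,ER) = val (card V) p (V,EL,ER)"
proof (induction n arbitrary: p V EL ER)
  case 0 then show ?case by simp
next
  case (Suc n)
  show ?case
  proof (cases "V = {}")
    case True then show ?thesis by (cases p) auto
  next
    case False
    then obtain m where m: "card V = Suc m" using Suc.prems(1) by (cases "card V") auto
    have eq: "val n p' (upd (V,EL,ER) {x} B) = val m p' (upd (V,EL,ER) {x} B)"
      "val n p' (upd (V,EL,ER) B {x}) = val m p' (upd (V,EL,ER) B {x})"
      if "x \<in> V" "B = {}" for x p' B
      using Suc.IH[of "V - {x}"] Suc.prems that m by (auto simp: upd_simp)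
    show ?thesis
    proof (cases p)
      case True
      show ?thesis using False
        apply (simp only: True m val.simps if_False)
        apply (rule arg_cong[where f=Max], rule image_cong, rule refl)
        using eq by simp
    next
      case False': False
      show ?thesis using False
        apply (simp only: False' m val.simps if_False)
        apply (rule arg_cong[where f=Min], rule image_cong, rule refl)
        using eq by simp
    qed
  qed
qed

lemma w_empty: "w p ({},EL,ER) = Draw" by (simp add: w_def)

lemma w_True: "finite V \<Longrightarrow> V \<noteq> {} \<Longrightarrow> w True (V,EL,ER) =
   Max ((\<lambda>x. if {x} \<in> EL then LeftWins else w False (upd (V,EL,ER) {x} {})) ` V)"
proof -
  assume f: "finite V" and ne: "V \<noteq> {}"
  then obtain m where m: "card V = Suc m" by (cases "card V") auto
  have "w False (upd (V,EL,ER) {x} {}) = val m False (upd (V,EL,ER) {x} {})" if "x \<in> V" for x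
    using that f m by (simp add: w_def upd_simp)
  then show ?thesis using ne by (auto simp: w_def m intro!: arg_cong[where f=Max] image_cong)
qed

lemma w_False: "finite V \<Longrightarrow> V \<noteq> {} \<Longrightarrow> w False (V,EL,ER) =
   Min ((\<lambda>x. if {x} \<in> ER then RightWins else w True (upd (V,EL,ER) {} {x})) ` V)"
proof -
  assume f: "finite V" and ne: "V \<noteq> {}"
  then obtain m where m: "card V = Suc m" by (cases "card V") auto
  have "w True (upd (V,EL,ER) {} {x}) = val m True (upd (V,EL,ER) {} {x})" if "x \<in> V" for x
    using that f m by (simp add: w_def upd_simp)
  then show ?thesis using ne by (auto simp: w_def m intro!: arg_cong[where f=Min] image_cong)
qed



lemma dom_val:
  fixes \<sigma> :: "'a \<Rightarrow> 'b"
  assumes "bij_betw \<sigma> V V'" "finite V"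
    "\<forall>e\<in>EL. e \<noteq> {} \<and> e \<subseteq> V" "\<forall>e\<in>ER. e \<noteq> {} \<and> e \<subseteq> V"
    "\<forall>e\<in>EL'. e \<noteq> {}" "\<forall>e\<in>ER'. e \<noteq> {}"
    "\<forall>e\<in>EL. \<exists>e'\<in>EL'. e' \<subseteq> \<sigma> ` e"
    "\<forall>f'\<in>ER'. \<exists>f\<in>ER. \<sigma> ` f \<subseteq> f'"
  shows "val n p (V,EL,ER) \<le> val n p (V',EL',ER')"
  using assms
proof (induction n arbitrary: p V EL ER V' EL' ER')
  case 0 then show ?case by simp
next
  case (Suc n)
  note bij = Suc.prems(1)
  have inj: "inj_on \<sigma> V" and img: "\<sigma> ` V = V'" using bij by (auto simp: bij_betw_def)
  have finV': "finite V'" using img Suc.prems(2) by auto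
  show ?case
  proof (cases "V = {}")
    case True
    then have "V' = {}" using img by auto
    then show ?thesis using True by (cases p) auto
  next
    case False
    then have V'ne: "V' \<noteq> {}" using img by auto
    show ?thesis
    proof (cases p)
      case True
      define f where "f x = (if {x} \<in> EL then LeftWins else val n False (upd (V,EL,ER) {x} {}))" for x
      define f' where "f' y = (if {y} \<in> EL' then LeftWins else val n False (upd (V',EL',ER') {y} {}))" for y
      have key: "f x \<le> f' (\<sigma> x)" if xV: "x \<in> V" for x
      proof -
        consider (a) "{x} \<in> EL" | (b) "{x} \<notin> EL" "{\<sigma> x} \<in> EL'" | (c) "{x} \<notin> EL" "{\<sigma> x} \<notin> EL'" by blast
        then show ?thesis
        proof cases
          case a
          then obtain e' where e': "e' \<in> EL'" "e' \<subseteq> \<sigma> ` {x}" using Suc.prems(7) by blast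
          then have "e' = {\<sigma> x}" using Suc.prems(5) by auto
          then show ?thesis using e' by (simp add: f'_def)
        next
          case b then show ?thesis by (simp add: f'_def)
        next
          case c
          have "val n False (V - {x}, eplus EL {x}, eminus ER {x}) \<le> val n False (V' - {\<sigma> x}, eplus EL' {\<sigma> x}, eminus ER' {\<sigma> x})"
          proof (rule Suc.IH)
            show "bij_betw \<sigma> (V - {x}) (V' - {\<sigma> x})" using bij xV by (rule bij_remove)
            show "finite (V - {x})" using Suc.prems(2) by simp
            show "\<forall>e\<in>eplus EL {x}. e \<noteq> {} \<and> e \<subseteq> V - {x}"
            proof
              fix e assume "e \<in> eplus EL {x}"
              then obtain e0 where "e0 \<in> EL" "e = e0 - {x}" by (auto simp: mem_eplus)
              moreover have "e0 \<noteq> {x}" using c calculation by auto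
              ultimately show "e \<noteq> {} \<and> e \<subseteq> V - {x}" using Suc.prems(3) by blast
            qed
            show "\<forall>e\<in>eminus ER {x}. e \<noteq> {} \<and> e \<subseteq> V - {x}" using Suc.prems(4) unfolding eminus_def by blast
            show "\<forall>e\<in>eplus EL' {\<sigma> x}. e \<noteq> {}"
            proof
              fix e assume "e \<in> eplus EL' {\<sigma> x}"
              then obtain e0 where "e0 \<in> EL'" "e = e0 - {\<sigma> x}" by (auto simp: mem_eplus)
              moreover have "e0 \<noteq> {\<sigma> x}" using c calculation by auto
              ultimately show "e \<noteq> {}" using Suc.prems(5) by blast
            qed
            show "\<forall>e\<in>eminus ER' {\<sigma> x}. e \<noteq> {}" using Suc.prems(6) unfolding eminus_def by blast
            show "\<forall>e\<in>eplus EL {x}. \<exists>e'\<in>eplus EL' {\<sigma> x}. e' \<subseteq> \<sigma> ` e"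
            proof
              fix e assume "e \<in> eplus EL {x}"
              then obtain e0 where e0: "e0 \<in> EL" "e = e0 - {x}" by (auto simp: mem_eplus)
              then obtain e' where "e' \<in> EL'" "e' \<subseteq> \<sigma> ` e0" using Suc.prems(7) by blast
              then have "e' - {\<sigma> x} \<in> eplus EL' {\<sigma> x}" "e' - {\<sigma> x} \<subseteq> \<sigma> ` e"
                using e0 by (auto simp: mem_eplus)
              then show "\<exists>e'\<in>eplus EL' {\<sigma> x}. e' \<subseteq> \<sigma> ` e" by blast
            qed
            show "\<forall>f'\<in>eminus ER' {\<sigma> x}. \<exists>f\<in>eminus ER {x}. \<sigma> ` f \<subseteq> f'"
            proof
              fix f' assume "f' \<in> eminus ER' {\<sigma> x}"
              then have f': "f' \<in> ER'" "\<sigma> x \<notin> f'" by (auto simp: mem_eminus)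
              then obtain f where "f \<in> ER" "\<sigma> ` f \<subseteq> f'" using Suc.prems(8) by blast
              moreover then have "x \<notin> f" using f' by blast
              ultimately have "f \<in> eminus ER {x}" "\<sigma> ` f \<subseteq> f'" by (auto simp: mem_eminus)
              then show "\<exists>f\<in>eminus ER {x}. \<sigma> ` f \<subseteq> f'" by blast
            qed
          qed
          then show ?thesis using c by (simp add: f_def f'_def upd_simp)
        qed
      qed
      have L: "val (Suc n) p (V,EL,ER) = Max (f ` V)" using True False by (simp add: f_def)
      have R: "val (Suc n) p (V',EL',ER') = Max (f' ` V')" using True V'ne by (simp add: f'_def)
      have "Max (f ` V) \<le> Max (f' ` V')"
      proof (rule Max.boundedI)
        show "finite (f ` V)" using Suc.prems(2) by simp
        show "f ` V \<noteq> {}" using False by simp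
        fix a assume "a \<in> f ` V"
        then obtain x where x: "x \<in> V" "a = f x" by blast
        have "f' (\<sigma> x) \<le> Max (f' ` V')" using finV' x img by (intro Max_ge) auto
        then show "a \<le> Max (f' ` V')" using key[OF x(1)] x(2) by (metis order_trans)
      qed
      then show ?thesis using L R by simp
    next
      case False': False
      define f where "f x = (if {x} \<in> ER then RightWins else val n True (upd (V,EL,ER) {} {x}))" for x
      define f' where "f' y = (if {y} \<in> ER' then RightWins else val n True (upd (V',EL',ER') {} {y}))" for y
      have key: "f x \<le> f' (\<sigma> x)" if xV: "x \<in> V" for x
      proof -
        consider (a) "{\<sigma> x} \<in> ER'" | (b) "{\<sigma> x} \<notin> ER'" "{x} \<in> ER" | (c) "{x} \<notin> ER" "{\<sigma> x} \<notin> ER'" by blast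
        then show ?thesis
        proof cases
          case a
          then obtain f0 where f0: "f0 \<in> ER" "\<sigma> ` f0 \<subseteq> {\<sigma> x}" using Suc.prems(8) by blast
          have "f0 \<subseteq> {x}"
          proof
            fix y assume "y \<in> f0"
            then have "\<sigma> y = \<sigma> x" "y \<in> V" using f0 Suc.prems(4) by auto
            then show "y \<in> {x}" using inj xV by (auto dest: inj_onD)
          qed
          then have "f0 = {x}" using f0 Suc.prems(4) by auto
          then show ?thesis using f0 by (simp add: f_def)
        next
          case b then show ?thesis by (simp add: f_def)
        next
          case c
          have "val n True (V - {x}, eminus EL {x}, eplus ER {x}) \<le> val n True (V' - {\<sigma> x}, eminus EL' {\<sigma> x}, eplus ER' {\<sigma> x})"
          proof (rule Suc.IH)
            show "bij_betw \<sigma> (V - {x}) (V' - {\<sigma> x})" using bij xV by (rule bij_remove)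
            show "finite (V - {x})" using Suc.prems(2) by simp
            show "\<forall>e\<in>eplus ER {x}. e \<noteq> {} \<and> e \<subseteq> V - {x}"
            proof
              fix e assume "e \<in> eplus ER {x}"
              then obtain e0 where "e0 \<in> ER" "e = e0 - {x}" by (auto simp: mem_eplus)
              moreover have "e0 \<noteq> {x}" using c calculation by auto
              ultimately show "e \<noteq> {} \<and> e \<subseteq> V - {x}" using Suc.prems(4) by blast
            qed
            show "\<forall>e\<in>eminus EL {x}. e \<noteq> {} \<and> e \<subseteq> V - {x}" using Suc.prems(3) unfolding eminus_def by blast
            show "\<forall>e\<in>eplus ER' {\<sigma> x}. e \<noteq> {}"
            proof
              fix e assume "e \<in> eplus ER' {\<sigma> x}"
              then obtain e0 where "e0 \<in> ER'" "e = e0 - {\<sigma> x}" by (auto simp: mem_eplus)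
              moreover have "e0 \<noteq> {\<sigma> x}" using c calculation by auto
              ultimately show "e \<noteq> {}" using Suc.prems(6) by blast
            qed
            show "\<forall>e\<in>eminus EL' {\<sigma> x}. e \<noteq> {}" using Suc.prems(5) unfolding eminus_def by blast
            show "\<forall>e\<in>eminus EL {x}. \<exists>e'\<in>eminus EL' {\<sigma> x}. e' \<subseteq> \<sigma> ` e"
            proof
              fix e assume "e \<in> eminus EL {x}"
              then have e: "e \<in> EL" "x \<notin> e" by (auto simp: mem_eminus)
              then obtain e' where e': "e' \<in> EL'" "e' \<subseteq> \<sigma> ` e" using Suc.prems(7) by blast
              have "\<sigma> x \<notin> \<sigma> ` e"
              proof
                assume "\<sigma> x \<in> \<sigma> ` e"
                then obtain y where "y \<in> e" "\<sigma> y = \<sigma> x" by auto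
                moreover have "y \<in> V" using calculation e Suc.prems(3) by auto
                ultimately have "y = x" using inj xV by (auto dest: inj_onD)
                then show False using \<open>y \<in> e\<close> e by simp
              qed
              then have "e' \<in> eminus EL' {\<sigma> x}" using e' by (auto simp: mem_eminus)
              then show "\<exists>e'\<in>eminus EL' {\<sigma> x}. e' \<subseteq> \<sigma> ` e" using e' by blast
            qed
            show "\<forall>f'\<in>eplus ER' {\<sigma> x}. \<exists>f\<in>eplus ER {x}. \<sigma> ` f \<subseteq> f'"
            proof
              fix f' assume "f' \<in> eplus ER' {\<sigma> x}"
              then obtain f0' where f0': "f0' \<in> ER'" "f' = f0' - {\<sigma> x}" by (auto simp: mem_eplus)
              then obtain f where f: "f \<in> ER" "\<sigma> ` f \<subseteq> f0'" using Suc.prems(8) by blast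
              have "\<sigma> ` (f - {x}) \<subseteq> f'"
              proof
                fix z assume "z \<in> \<sigma> ` (f - {x})"
                then obtain y where y: "y \<in> f" "y \<noteq> x" "z = \<sigma> y" by auto
                have "y \<in> V" using y f Suc.prems(4) by auto
                then have "\<sigma> y \<noteq> \<sigma> x" using inj xV y by (auto dest: inj_onD)
                then show "z \<in> f'" using y f f0' by auto
              qed
              moreover have "f - {x} \<in> eplus ER {x}" using f by (auto simp: mem_eplus)
              ultimately show "\<exists>f\<in>eplus ER {x}. \<sigma> ` f \<subseteq> f'" by blast
            qed
          qed
          then show ?thesis using c by (simp add: f_def f'_def upd_simp)
        qed
      qed
      have L: "val (Suc n) p (V,EL,ER) = Min (f ` V)" using False' False by (simp add: f_def)
      have R: "val (Suc n) p (V',EL',ER') = Min (f' ` V')" using False' V'ne by (simp add: f'_def)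
      have "Min (f ` V) \<le> Min (f' ` V')"
      proof (rule Min.boundedI)
        show "finite (f' ` V')" using finV' by simp
        show "f' ` V' \<noteq> {}" using V'ne by simp
        fix a assume "a \<in> f' ` V'"
        then obtain x where x: "x \<in> V" "a = f' (\<sigma> x)" using img by blast
        have "Min (f ` V) \<le> f x" using Suc.prems(2) x by (intro Min_le) auto
        then show "Min (f ` V) \<le> a" using key[OF x(1)] x(2) by (metis order_trans)
      qed
      then show ?thesis using L R by simp
    qed
  qed
qed



lemma mem_ep: "x \<in> eminus (eplus E A) B \<longleftrightarrow> (\<exists>e\<in>E. x = e - A \<and> (e - A) \<inter> B = {})"
  by (auto simp: mem_eminus mem_eplus)

lemma swap_dom:
  assumes fin: "finite V" and bl: "\<forall>e\<in>EL. e \<noteq> {} \<and> e \<subseteq> V" and rd: "\<forall>e\<in>ER. e \<noteq> {} \<and> e \<subseteq> V"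
    and uv: "u \<noteq> v" and imp: "\<forall>e\<in>EL \<union> ER. u \<in> e \<longrightarrow> v \<in> e"
    and vR: "{v} \<notin> ER" and vL: "{v} \<notin> EL"
  shows "w p (upd (V,EL,ER) {u} {v}) \<le> w p (upd (V,EL,ER) {v} {u})"
proof -
  define D where "D = V - {u,v}"
  have e1: "upd (V,EL,ER) {u} {v} = (D, eminus (eplus EL {u}) {v}, eminus (eplus ER {v}) {u})"
    by (simp add: upd_simp D_def, blast)
  have e2: "upd (V,EL,ER) {v} {u} = (D, eminus (eplus EL {v}) {u}, eminus (eplus ER {u}) {v})"
    by (simp add: upd_simp D_def insert_commute)
  have "val (card D) p (D, eminus (eplus EL {u}) {v}, eminus (eplus ER {v}) {u})
      \<le> val (card D) p (D, eminus (eplus EL {v}) {u}, eminus (eplus ER {u}) {v})"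
  proof (rule dom_val[where \<sigma>=id])
    show "bij_betw id D D" by simp
    show "finite D" using fin by (simp add: D_def)
    show "\<forall>e\<in>eminus (eplus EL {u}) {v}. e \<noteq> {} \<and> e \<subseteq> D"
    proof
      fix e assume "e \<in> eminus (eplus EL {u}) {v}"
      then obtain e0 where e0: "e0 \<in> EL" "e = e0 - {u}" "(e0 - {u}) \<inter> {v} = {}" by (auto simp: mem_ep)
      then have "v \<notin> e0" using uv by blast
      then have "u \<notin> e0" using imp e0 by blast
      then show "e \<noteq> {} \<and> e \<subseteq> D" using e0 bl \<open>v \<notin> e0\<close> by (auto simp: D_def)
    qed
    show "\<forall>e\<in>eminus (eplus ER {v}) {u}. e \<noteq> {} \<and> e \<subseteq> D"
    proof
      fix e assume "e \<in> eminus (eplus ER {v}) {u}"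
      then obtain e0 where e0: "e0 \<in> ER" "e = e0 - {v}" "(e0 - {v}) \<inter> {u} = {}" by (auto simp: mem_ep)
      then have "u \<notin> e0" using uv by blast
      have "e0 \<noteq> {v}" using vR e0 by blast
      then have "e \<noteq> {}" using e0 rd by blast
      then show "e \<noteq> {} \<and> e \<subseteq> D" using e0 rd \<open>u \<notin> e0\<close> by (auto simp: D_def)
    qed
    show "\<forall>e\<in>eminus (eplus EL {v}) {u}. e \<noteq> {}"
    proof
      fix e assume "e \<in> eminus (eplus EL {v}) {u}"
      then obtain e0 where e0: "e0 \<in> EL" "e = e0 - {v}" by (auto simp: mem_ep)
      have "e0 \<noteq> {v}" using vL e0 by blast
      then show "e \<noteq> {}" using e0 bl by blast
    qed
    show "\<forall>e\<in>eminus (eplus ER {u}) {v}. e \<noteq> {}"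
    proof
      fix e assume "e \<in> eminus (eplus ER {u}) {v}"
      then obtain e0 where e0: "e0 \<in> ER" "e = e0 - {u}" "(e0 - {u}) \<inter> {v} = {}" by (auto simp: mem_ep)
      then have "v \<notin> e0" using uv by blast
      then have "u \<notin> e0" using imp e0 by blast
      then show "e \<noteq> {}" using e0 rd by blast
    qed
    show "\<forall>e\<in>eminus (eplus EL {u}) {v}. \<exists>e'\<in>eminus (eplus EL {v}) {u}. e' \<subseteq> id ` e"
    proof
      fix e assume "e \<in> eminus (eplus EL {u}) {v}"
      then obtain e0 where e0: "e0 \<in> EL" "e = e0 - {u}" "(e0 - {u}) \<inter> {v} = {}" by (auto simp: mem_ep)
      then have "v \<notin> e0" using uv by blast
      then have "u \<notin> e0" using imp e0 by blast
      have "e0 \<in> eminus (eplus EL {v}) {u}" unfolding mem_ep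
        using e0(1) \<open>u \<notin> e0\<close> \<open>v \<notin> e0\<close> by (intro bexI[where x=e0]) auto
      moreover have "e0 \<subseteq> id ` e" using e0 \<open>u \<notin> e0\<close> by auto
      ultimately show "\<exists>e'\<in>eminus (eplus EL {v}) {u}. e' \<subseteq> id ` e" by blast
    qed
    show "\<forall>f'\<in>eminus (eplus ER {u}) {v}. \<exists>f\<in>eminus (eplus ER {v}) {u}. id ` f \<subseteq> f'"
    proof
      fix f' assume "f' \<in> eminus (eplus ER {u}) {v}"
      then obtain e0 where e0: "e0 \<in> ER" "f' = e0 - {u}" "(e0 - {u}) \<inter> {v} = {}" by (auto simp: mem_ep)
      then have "v \<notin> e0" using uv by blast
      then have "u \<notin> e0" using imp e0 by blast
      have "e0 \<in> eminus (eplus ER {v}) {u}" unfolding mem_ep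
        using e0(1) \<open>u \<notin> e0\<close> \<open>v \<notin> e0\<close> by (intro bexI[where x=e0]) auto
      moreover have "id ` e0 \<subseteq> f'" using e0 \<open>u \<notin> e0\<close> by auto
      ultimately show "\<exists>f\<in>eminus (eplus ER {v}) {u}. id ` f \<subseteq> f'" by blast
    qed
  qed
  then show ?thesis unfolding e1 e2 w_def by simp
qed



lemma upd_comm1: "u \<noteq> v \<Longrightarrow> x \<noteq> v \<Longrightarrow> upd (upd (V,EL,ER) {u} {v}) {x} {} = upd (upd (V,EL,ER) {x} {}) {u} {v}"
proof -
  assume a: "x \<noteq> v" and b: "u \<noteq> v"
  have 1: "upd (upd (V,EL,ER) {u} {v}) {x} {} = upd (V,EL,ER) ({u} \<union> {x}) ({v} \<union> {})"
    by (rule upd_upd) (use a b in blast)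
  have 2: "upd (upd (V,EL,ER) {x} {}) {u} {v} = upd (V,EL,ER) ({x} \<union> {u}) ({} \<union> {v})"
    by (rule upd_upd) (use a b in blast)
  show ?thesis unfolding 1 2 by (metis Un_commute)
qed

lemma upd_comm2: "u \<noteq> v \<Longrightarrow> x \<noteq> u \<Longrightarrow> upd (upd (V,EL,ER) {u} {v}) {} {x} = upd (upd (V,EL,ER) {} {x}) {u} {v}"
proof -
  assume a: "x \<noteq> u" and b: "u \<noteq> v"
  have 1: "upd (upd (V,EL,ER) {u} {v}) {} {x} = upd (V,EL,ER) ({u} \<union> {}) ({v} \<union> {x})"
    by (rule upd_upd) (use a b in blast)
  have 2: "upd (upd (V,EL,ER) {} {x}) {u} {v} = upd (V,EL,ER) ({} \<union> {u}) ({x} \<union> {v})"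
    by (rule upd_upd) (use a b in blast)
  show ?thesis unfolding 1 2 by (metis Un_commute)
qed

lemma upd_comm3: "u \<noteq> v \<Longrightarrow> upd (upd (V,EL,ER) {} {u}) {v} {} = upd (V,EL,ER) {v} {u}"
  by (subst upd_upd) auto

lemma upd_comm4: "u \<noteq> v \<Longrightarrow> upd (upd (V,EL,ER) {} {v}) {u} {} = upd (V,EL,ER) {u} {v}"
  by (subst upd_upd) auto

lemma iii:
  assumes "finite V" "\<forall>e\<in>EL. e \<noteq> {} \<and> e \<subseteq> V" "\<forall>e\<in>ER. e \<noteq> {} \<and> e \<subseteq> V"
    "u \<noteq> v" "u \<in> V" "v \<in> V" "\<forall>e\<in>EL \<union> ER. u \<in> e \<longrightarrow> v \<in> e" "{v} \<notin> ER"
  shows "w p (upd (V,EL,ER) {u} {v}) \<le> w p (V,EL,ER)"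
  using assms
proof (induction "card V" arbitrary: p V EL ER rule: less_induct)
  case less
  note fin = less.prems(1) and bl = less.prems(2) and rd = less.prems(3) and uv = less.prems(4)
    and uV = less.prems(5) and vV = less.prems(6) and imp = less.prems(7) and vR = less.prems(8)
  have uL: "{u} \<notin> EL" and uR: "{u} \<notin> ER" using imp uv by auto
  have Vne: "V \<noteq> {}" using uV by auto
  have H: "upd (V,EL,ER) {u} {v} = (V - {u,v}, eminus (eplus EL {u}) {v}, eminus (eplus ER {v}) {u})"
    by (auto simp: upd_simp)
  show ?case
  proof (cases p)
    case True
    define fG where "fG x = (if {x} \<in> EL then LeftWins else w False (upd (V,EL,ER) {x} {}))" for x
    have wG: "w True (V,EL,ER) = Max (fG ` V)" using w_True[OF fin Vne] by (simp add: fG_def)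
    have geG: "fG x \<le> w True (V,EL,ER)" if "x \<in> V" for x
      unfolding wG by (rule Max_ge, simp add: fin, rule imageI, rule that)
    show ?thesis
    proof (cases "V - {u,v} = {}")
      case True': True
      have Vv: "V - {v} = {u}" using True' uV uv by auto
      have "w False (upd (V,EL,ER) {v} {}) = Draw"
      proof -
        have e: "upd (V,EL,ER) {v} {} = ({u}, eplus EL {v}, eminus ER {v})" using Vv by (simp add: upd_simp)
        have "{u} \<notin> eminus ER {v}" using uR by (simp add: mem_eminus)
        then show ?thesis unfolding e by (simp add: w_False upd_simp w_empty)
      qed
      then have "Draw \<le> fG v" by (simp add: fG_def)
      also have "\<dots> \<le> w True (V,EL,ER)" using geG vV by simp
      finally have "Draw \<le> w True (V,EL,ER)" .
      moreover have "w True (upd (V,EL,ER) {u} {v}) = Draw" unfolding H True' by (rule w_empty)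
      ultimately show ?thesis using True by simp
    next
      case False': False
      define fH where "fH x = (if {x} \<in> eminus (eplus EL {u}) {v} then LeftWins
          else w False (upd (V - {u,v}, eminus (eplus EL {u}) {v}, eminus (eplus ER {v}) {u}) {x} {}))" for x
      have wH: "w True (upd (V,EL,ER) {u} {v}) = Max (fH ` (V - {u,v}))"
        unfolding H using w_True[OF _ False'] fin by (simp add: fH_def)
      have key: "fH x \<le> fG x" if xV: "x \<in> V - {u,v}" for x
      proof (cases "{x} \<in> EL")
        case True
        then show ?thesis by (simp add: fG_def)
      next
        case xL: False
        have "{x} \<notin> eminus (eplus EL {u}) {v}"
        proof
          assume "{x} \<in> eminus (eplus EL {u}) {v}"
          then obtain e where e: "e \<in> EL" "{x} = e - {u}" "(e - {u}) \<inter> {v} = {}" by (auto simp: mem_ep)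
          then have "v \<notin> e" using uv by blast
          then have "u \<notin> e" using imp e by blast
          then show False using e xL by simp
        qed
        then have fHx: "fH x = w False (upd (upd (V,EL,ER) {x} {}) {u} {v})"
          using upd_comm1[where x=x and v=v and u=u and V=V and EL=EL and ER=ER, OF uv] xV by (simp add: fH_def H[symmetric])
        have fGx: "fG x = w False (upd (V,EL,ER) {x} {})" using xL by (simp add: fG_def)
        have e: "upd (V,EL,ER) {x} {} = (V - {x}, eplus EL {x}, eminus ER {x})" by (simp add: upd_simp)
        have "w False (upd (V - {x}, eplus EL {x}, eminus ER {x}) {u} {v}) \<le> w False (V - {x}, eplus EL {x}, eminus ER {x})"
        proof (rule less.hyps)
          show "card (V - {x}) < card V" using fin xV by (intro card_Diff1_less) auto
          show "finite (V - {x})" using fin by simp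
          show "\<forall>e\<in>eplus EL {x}. e \<noteq> {} \<and> e \<subseteq> V - {x}"
          proof
            fix e assume "e \<in> eplus EL {x}"
            then obtain e0 where "e0 \<in> EL" "e = e0 - {x}" by (auto simp: mem_eplus)
            moreover have "e0 \<noteq> {x}" using xL calculation by auto
            ultimately show "e \<noteq> {} \<and> e \<subseteq> V - {x}" using bl by blast
          qed
          show "\<forall>e\<in>eminus ER {x}. e \<noteq> {} \<and> e \<subseteq> V - {x}" using rd unfolding eminus_def by blast
          show "u \<noteq> v" by fact
          show "u \<in> V - {x}" "v \<in> V - {x}" using uV vV xV by auto
          show "\<forall>e\<in>eplus EL {x} \<union> eminus ER {x}. u \<in> e \<longrightarrow> v \<in> e"
          proof
            fix e assume "e \<in> eplus EL {x} \<union> eminus ER {x}"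
            then show "u \<in> e \<longrightarrow> v \<in> e"
            proof
              assume "e \<in> eplus EL {x}"
              then obtain e0 where "e0 \<in> EL" "e = e0 - {x}" by (auto simp: mem_eplus)
              then show ?thesis using imp xV by auto
            next
              assume "e \<in> eminus ER {x}"
              then show ?thesis using imp unfolding eminus_def by blast
            qed
          qed
          show "{v} \<notin> eminus ER {x}" using vR by (simp add: mem_eminus)
        qed
        then show ?thesis unfolding fHx fGx e .
      qed
      have "Max (fH ` (V - {u,v})) \<le> w True (V,EL,ER)"
      proof (rule Max.boundedI)
        show "finite (fH ` (V - {u, v}))" using fin by simp
        show "fH ` (V - {u, v}) \<noteq> {}" using False' by simp
        fix a assume "a \<in> fH ` (V - {u,v})"
        then obtain x where x: "x \<in> V - {u,v}" "a = fH x" by blast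
        then show "a \<le> w True (V,EL,ER)" using key[OF x(1)] geG[of x] by (metis order_trans DiffD1)
      qed
      then show ?thesis using wH True by simp
    qed
  next
    case False
    define fG where "fG x = (if {x} \<in> ER then RightWins else w True (upd (V,EL,ER) {} {x}))" for x
    have wG: "w False (V,EL,ER) = Min (fG ` V)" using w_False[OF fin Vne] by (simp add: fG_def)
    have key: "w False (upd (V,EL,ER) {u} {v}) \<le> fG x" if xV: "x \<in> V" for x
    proof -
      consider (a) "x = u" | (b) "x = v" | (c) "x \<in> V - {u,v}" using xV by blast
      then show ?thesis
      proof cases
        case a
        have fGu: "fG u = w True (upd (V,EL,ER) {} {u})" using uR by (simp add: fG_def)
        have e: "upd (V,EL,ER) {} {u} = (V - {u}, eminus EL {u}, eplus ER {u})" by (simp add: upd_simp)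
        have "V - {u} \<noteq> {}" using vV uv by auto
        then have wu: "w True (upd (V,EL,ER) {} {u}) = Max ((\<lambda>x. if {x} \<in> eminus EL {u} then LeftWins
            else w False (upd (V - {u}, eminus EL {u}, eplus ER {u}) {x} {})) ` (V - {u}))"
          unfolding e using fin by (simp add: w_True)
        have ge: "(if {v} \<in> eminus EL {u} then LeftWins
            else w False (upd (V - {u}, eminus EL {u}, eplus ER {u}) {v} {})) \<le> w True (upd (V,EL,ER) {} {u})"
          unfolding wu by (rule Max_ge, simp add: fin, rule imageI, use vV uv in blast)
        show ?thesis
        proof (cases "{v} \<in> EL")
          case True
          then have "{v} \<in> eminus EL {u}" using uv by (simp add: mem_eminus)
          then have "LeftWins \<le> fG u" using ge fGu by simp
          then have "fG u = LeftWins" by (rule antisym[OF le_LeftWins])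
          then show ?thesis using a by simp
        next
          case vL: False
          then have "{v} \<notin> eminus EL {u}" by (simp add: mem_eminus)
          have X: "upd (V - {u}, eminus EL {u}, eplus ER {u}) {v} {} = upd (V,EL,ER) {v} {u}"
            using upd_comm3[where V=V and EL=EL and ER=ER, OF uv, unfolded e] .
          have A1: "w False (upd (V,EL,ER) {v} {u}) \<le> fG u"
            using ge \<open>{v} \<notin> eminus EL {u}\<close> unfolding X fGu[symmetric] by simp
          have A2: "w False (upd (V,EL,ER) {u} {v}) \<le> w False (upd (V,EL,ER) {v} {u})"
            using swap_dom[OF fin bl rd uv imp vR vL] .
          show ?thesis unfolding a using order_trans[OF A2 A1] .
        qed
      next
        case b
        have fGv: "fG v = w True (upd (V,EL,ER) {} {v})" using vR by (simp add: fG_def)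
        have e: "upd (V,EL,ER) {} {v} = (V - {v}, eminus EL {v}, eplus ER {v})" by (simp add: upd_simp)
        have "V - {v} \<noteq> {}" using uV uv by auto
        then have wv: "w True (upd (V,EL,ER) {} {v}) = Max ((\<lambda>x. if {x} \<in> eminus EL {v} then LeftWins
            else w False (upd (V - {v}, eminus EL {v}, eplus ER {v}) {x} {})) ` (V - {v}))"
          unfolding e using fin by (simp add: w_True)
        have ge: "(if {u} \<in> eminus EL {v} then LeftWins
            else w False (upd (V - {v}, eminus EL {v}, eplus ER {v}) {u} {})) \<le> w True (upd (V,EL,ER) {} {v})"
          unfolding wv by (rule Max_ge, simp add: fin, rule imageI, use uV uv in blast)
        have "{u} \<notin> eminus EL {v}" using uL by (simp add: mem_eminus)
        then have "w False (upd (V,EL,ER) {u} {v}) \<le> w True (upd (V,EL,ER) {} {v})"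
          using ge upd_comm4[where V=V and EL=EL and ER=ER, OF uv] e by simp
        then show ?thesis using b fGv by simp
      next
        case c
        define hH where "hH y = (if {y} \<in> eminus (eplus ER {v}) {u} then RightWins
          else w True (upd (V - {u,v}, eminus (eplus EL {u}) {v}, eminus (eplus ER {v}) {u}) {} {y}))" for y
        have "V - {u,v} \<noteq> {}" using c by auto
        then have wH: "w False (upd (V,EL,ER) {u} {v}) = Min (hH ` (V - {u,v}))"
          unfolding H using fin by (simp add: w_False hH_def)
        have le1: "w False (upd (V,EL,ER) {u} {v}) \<le> hH x"
          unfolding wH by (rule Min_le, simp add: fin, rule imageI, rule c)
        show ?thesis
        proof (cases "{x} \<in> eminus (eplus ER {v}) {u}")
          case True
          then have "hH x = RightWins" by (simp add: hH_def)
          then show ?thesis using le1 RightWins_le[of "fG x"] by (metis order_trans)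
        next
          case xR': False
          have xR: "{x} \<notin> ER"
          proof
            assume "{x} \<in> ER"
            then have "{x} \<in> eminus (eplus ER {v}) {u}" unfolding mem_ep using c
              by (intro bexI[where x="{x}"]) auto
            then show False using xR' by simp
          qed
          have xvR: "{x,v} \<notin> ER"
          proof
            assume "{x,v} \<in> ER"
            then have "{x} \<in> eminus (eplus ER {v}) {u}" unfolding mem_ep using c uv
              by (intro bexI[where x="{x,v}"]) auto
            then show False using xR' by simp
          qed
          have hHx: "hH x = w True (upd (upd (V,EL,ER) {} {x}) {u} {v})"
            using xR' upd_comm2[where x=x and v=v and u=u and V=V and EL=EL and ER=ER, OF uv] c by (simp add: hH_def H[symmetric])
          have fGx: "fG x = w True (upd (V,EL,ER) {} {x})" using xR by (simp add: fG_def)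
          have e: "upd (V,EL,ER) {} {x} = (V - {x}, eminus EL {x}, eplus ER {x})" by (simp add: upd_simp)
          have "w True (upd (V - {x}, eminus EL {x}, eplus ER {x}) {u} {v}) \<le> w True (V - {x}, eminus EL {x}, eplus ER {x})"
          proof (rule less.hyps)
            show "card (V - {x}) < card V" using fin c by (intro card_Diff1_less) auto
            show "finite (V - {x})" using fin by simp
            show "\<forall>e\<in>eplus ER {x}. e \<noteq> {} \<and> e \<subseteq> V - {x}"
            proof
              fix e assume "e \<in> eplus ER {x}"
              then obtain e0 where "e0 \<in> ER" "e = e0 - {x}" by (auto simp: mem_eplus)
              moreover have "e0 \<noteq> {x}" using xR calculation by auto
              ultimately show "e \<noteq> {} \<and> e \<subseteq> V - {x}" using rd by blast
            qed
            show "\<forall>e\<in>eminus EL {x}. e \<noteq> {} \<and> e \<subseteq> V - {x}" using bl unfolding eminus_def by blast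
            show "u \<noteq> v" by fact
            show "u \<in> V - {x}" "v \<in> V - {x}" using uV vV c by auto
            show "\<forall>e\<in>eminus EL {x} \<union> eplus ER {x}. u \<in> e \<longrightarrow> v \<in> e"
            proof
              fix e assume "e \<in> eminus EL {x} \<union> eplus ER {x}"
              then show "u \<in> e \<longrightarrow> v \<in> e"
              proof
                assume "e \<in> eplus ER {x}"
                then obtain e0 where "e0 \<in> ER" "e = e0 - {x}" by (auto simp: mem_eplus)
                then show ?thesis using imp c by auto
              next
                assume "e \<in> eminus EL {x}"
                then show ?thesis using imp unfolding eminus_def by blast
              qed
            qed
            show "{v} \<notin> eplus ER {x}"
            proof
              assume "{v} \<in> eplus ER {x}"
              then obtain f where f: "f \<in> ER" "{v} = f - {x}" by (auto simp: mem_eplus)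
              then have "f = {v} \<or> f = {x,v}" by blast
              then show False using f vR xvR by blast
            qed
          qed
          then have "hH x \<le> fG x" unfolding hHx fGx e .
          then show ?thesis using le1 by (metis order_trans)
        qed
      qed
    qed
    have "w False (upd (V,EL,ER) {u} {v}) \<le> Min (fG ` V)"
    proof (rule Min.boundedI)
      show "finite (fG ` V)" using fin by simp
      show "fG ` V \<noteq> {}" using Vne by simp
      fix a assume "a \<in> fG ` V"
      then show "w False (upd (V,EL,ER) {u} {v}) \<le> a" using key by blast
    qed
    then show ?thesis using wG False by simp
  qed
qed



fun rrev :: "result \<Rightarrow> result" where
  "rrev RightWins = LeftWins" | "rrev Draw = Draw" | "rrev LeftWins = RightWins"

lemma rrev_le: "rrev a \<le> rrev b \<longleftrightarrow> b \<le> a"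
  by (cases a; cases b) (simp_all add: less_eq_result_def)

lemma rrev_rrev[simp]: "rrev (rrev a) = a" by (cases a) simp_all

lemma Max_rrev: "finite A \<Longrightarrow> A \<noteq> {} \<Longrightarrow> Max (rrev ` A) = rrev (Min A)"
proof (rule Max_eqI)
  assume f: "finite A" and ne: "A \<noteq> {}"
  show "finite (rrev ` A)" using f by simp
  show "rrev (Min A) \<in> rrev ` A" using Min_in[OF f ne] by simp
  fix y assume "y \<in> rrev ` A"
  then obtain a where "a \<in> A" "y = rrev a" by blast
  then show "y \<le> rrev (Min A)" using Min_le[OF f] by (simp add: rrev_le)
qed

lemma Min_rrev: "finite A \<Longrightarrow> A \<noteq> {} \<Longrightarrow> Min (rrev ` A) = rrev (Max A)"
proof (rule Min_eqI)
  assume f: "finite A" and ne: "A \<noteq> {}"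
  show "finite (rrev ` A)" using f by simp
  show "rrev (Max A) \<in> rrev ` A" using Max_in[OF f ne] by simp
  fix y assume "y \<in> rrev ` A"
  then obtain a where "a \<in> A" "y = rrev a" by blast
  then show "rrev (Max A) \<le> y" using Max_ge[OF f] by (simp add: rrev_le)
qed

lemma val_flip: "finite V \<Longrightarrow> val n p (V,EL,ER) = rrev (val n (\<not>p) (V,ER,EL))"
proof (induction n arbitrary: p V EL ER)
  case 0 then show ?case by simp
next
  case (Suc n)
  show ?case
  proof (cases "V = {}")
    case True then show ?thesis by (cases p) simp_all
  next
    case False
    show ?thesis
    proof (cases p)
      case True
      define g where "g x = (if {x} \<in> EL then RightWins else val n True (upd (V,ER,EL) {} {x}))" for x
      have eq: "(\<lambda>x. if {x} \<in> EL then LeftWins else val n False (upd (V,EL,ER) {x} {})) = rrev \<circ> g"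
      proof
        fix x
        have "val n False (V - {x}, eplus EL {x}, eminus ER {x}) = rrev (val n True (V - {x}, eminus ER {x}, eplus EL {x}))"
          using Suc.IH[of "V - {x}" False "eplus EL {x}" "eminus ER {x}"] Suc.prems by simp
        then show "(if {x} \<in> EL then LeftWins else val n False (upd (V,EL,ER) {x} {})) = (rrev \<circ> g) x"
          by (simp add: g_def upd_simp)
      qed
      have "val (Suc n) p (V,EL,ER) = Max ((rrev \<circ> g) ` V)"
        using True False by (simp only: val.simps if_False eq)
      also have "\<dots> = rrev (Min (g ` V))"
        by (simp only: image_comp[symmetric] Max_rrev Suc.prems finite_imageI False image_is_empty not_False_eq_True)
      also have "\<dots> = rrev (val (Suc n) (\<not>p) (V,ER,EL))"
        using True False by (simp add: g_def)
      finally show ?thesis .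
    next
      case False': False
      define g where "g x = (if {x} \<in> ER then LeftWins else val n False (upd (V,ER,EL) {x} {}))" for x
      have eq: "(\<lambda>x. if {x} \<in> ER then RightWins else val n True (upd (V,EL,ER) {} {x})) = rrev \<circ> g"
      proof
        fix x
        have "val n True (V - {x}, eminus EL {x}, eplus ER {x}) = rrev (val n False (V - {x}, eplus ER {x}, eminus EL {x}))"
          using Suc.IH[of "V - {x}" True "eminus EL {x}" "eplus ER {x}"] Suc.prems by simp
        then show "(if {x} \<in> ER then RightWins else val n True (upd (V,EL,ER) {} {x})) = (rrev \<circ> g) x"
          by (simp add: g_def upd_simp)
      qed
      have "val (Suc n) p (V,EL,ER) = Min ((rrev \<circ> g) ` V)"
        using False' False by (simp only: val.simps if_False eq)
      also have "\<dots> = rrev (Max (g ` V))"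
        by (simp only: image_comp[symmetric] Min_rrev Suc.prems finite_imageI False image_is_empty not_False_eq_True)
      also have "\<dots> = rrev (val (Suc n) (\<not>p) (V,ER,EL))"
        using False' False by (simp add: g_def)
      finally show ?thesis .
    qed
  qed
qed

lemma w_flip: "finite V \<Longrightarrow> w p (V,EL,ER) = rrev (w (\<not>p) (V,ER,EL))"
  unfolding w_def fst_conv by (rule val_flip)



lemma dom_i:
  assumes fin: "finite V" and bl: "\<forall>e\<in>EL. e \<noteq> {} \<and> e \<subseteq> V" and rd: "\<forall>e\<in>ER. e \<noteq> {} \<and> e \<subseteq> V"
    and uv: "u \<noteq> v" and uV: "u \<in> V" and vV: "v \<in> V" and imp: "\<forall>e\<in>EL \<union> ER. u \<in> e \<longrightarrow> v \<in> e"
    and uL: "{u} \<notin> EL" and vL: "{v} \<notin> EL"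
  shows "w p (upd (V,EL,ER) {u} {}) \<le> w p (upd (V,EL,ER) {v} {})"
proof -
  define \<sigma> where "\<sigma> x = (if x = v then u else x)" for x
  have e1: "upd (V,EL,ER) {u} {} = (V - {u}, eplus EL {u}, eminus ER {u})" by (simp add: upd_simp)
  have e2: "upd (V,EL,ER) {v} {} = (V - {v}, eplus EL {v}, eminus ER {v})" by (simp add: upd_simp)
  have c: "card (V - {v}) = card (V - {u})" using fin uV vV by simp
  have "val (card (V - {u})) p (V - {u}, eplus EL {u}, eminus ER {u})
      \<le> val (card (V - {u})) p (V - {v}, eplus EL {v}, eminus ER {v})"
  proof (rule dom_val[where \<sigma>=\<sigma>])
    show "bij_betw \<sigma> (V - {u}) (V - {v})"
      unfolding bij_betw_def
    proof
      show "inj_on \<sigma> (V - {u})" unfolding inj_on_def \<sigma>_def by auto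
      show "\<sigma> ` (V - {u}) = V - {v}"
      proof
        show "\<sigma> ` (V - {u}) \<subseteq> V - {v}" using uV uv by (auto simp: \<sigma>_def)
        show "V - {v} \<subseteq> \<sigma> ` (V - {u})"
        proof
          fix y assume y: "y \<in> V - {v}"
          show "y \<in> \<sigma> ` (V - {u})"
          proof (cases "y = u")
            case True
            then have "y = \<sigma> v" by (simp add: \<sigma>_def)
            then show ?thesis using vV uv by auto
          next
            case False
            then have "y = \<sigma> y" using y by (simp add: \<sigma>_def)
            then show ?thesis using y False by blast
          qed
        qed
      qed
    qed
    show "finite (V - {u})" using fin by simp
    show "\<forall>e\<in>eplus EL {u}. e \<noteq> {} \<and> e \<subseteq> V - {u}"
    proof
      fix e assume "e \<in> eplus EL {u}"
      then obtain e0 where "e0 \<in> EL" "e = e0 - {u}" by (auto simp: mem_eplus)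
      moreover have "e0 \<noteq> {u}" using uL calculation by auto
      ultimately show "e \<noteq> {} \<and> e \<subseteq> V - {u}" using bl by blast
    qed
    show "\<forall>e\<in>eminus ER {u}. e \<noteq> {} \<and> e \<subseteq> V - {u}" using rd unfolding eminus_def by blast
    show "\<forall>e\<in>eplus EL {v}. e \<noteq> {}"
    proof
      fix e assume "e \<in> eplus EL {v}"
      then obtain e0 where "e0 \<in> EL" "e = e0 - {v}" by (auto simp: mem_eplus)
      moreover have "e0 \<noteq> {v}" using vL calculation by auto
      ultimately show "e \<noteq> {}" using bl by blast
    qed
    show "\<forall>e\<in>eminus ER {v}. e \<noteq> {}" using rd unfolding eminus_def by blast
    show "\<forall>e\<in>eplus EL {u}. \<exists>e'\<in>eplus EL {v}. e' \<subseteq> \<sigma> ` e"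
    proof
      fix e assume "e \<in> eplus EL {u}"
      then obtain e0 where e0: "e0 \<in> EL" "e = e0 - {u}" by (auto simp: mem_eplus)
      have "e0 - {v} \<subseteq> \<sigma> ` e"
      proof
        fix y assume y: "y \<in> e0 - {v}"
        show "y \<in> \<sigma> ` e"
        proof (cases "y = u")
          case True
          then have "v \<in> e0" using imp e0 y by blast
          then have "v \<in> e" using e0 uv by simp
          moreover have "y = \<sigma> v" using True by (simp add: \<sigma>_def)
          ultimately show ?thesis by blast
        next
          case False
          then have "y = \<sigma> y" "y \<in> e" using y e0 by (auto simp: \<sigma>_def)
          then show ?thesis by blast
        qed
      qed
      moreover have "e0 - {v} \<in> eplus EL {v}" using e0 by (auto simp: mem_eplus)
      ultimately show "\<exists>e'\<in>eplus EL {v}. e' \<subseteq> \<sigma> ` e" by blast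
    qed
    show "\<forall>f'\<in>eminus ER {v}. \<exists>f\<in>eminus ER {u}. \<sigma> ` f \<subseteq> f'"
    proof
      fix f' assume "f' \<in> eminus ER {v}"
      then have f': "f' \<in> ER" "v \<notin> f'" by (auto simp: mem_eminus)
      then have "u \<notin> f'" using imp by blast
      then have "f' \<in> eminus ER {u}" using f' by (simp add: mem_eminus)
      moreover have "\<sigma> ` f' \<subseteq> f'" using f' by (auto simp: \<sigma>_def)
      ultimately show "\<exists>f\<in>eminus ER {u}. \<sigma> ` f \<subseteq> f'" by blast
    qed
  qed
  then show ?thesis unfolding e1 e2 w_def fst_conv c .
qed

lemma dom_ii:
  assumes fin: "finite V" and bl: "\<forall>e\<in>EL. e \<noteq> {} \<and> e \<subseteq> V" and rd: "\<forall>e\<in>ER. e \<noteq> {} \<and> e \<subseteq> V"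
    and uv: "u \<noteq> v" and uV: "u \<in> V" and vV: "v \<in> V" and imp: "\<forall>e\<in>EL \<union> ER. u \<in> e \<longrightarrow> v \<in> e"
    and uR: "{u} \<notin> ER" and vR: "{v} \<notin> ER"
  shows "w p (upd (V,EL,ER) {} {v}) \<le> w p (upd (V,EL,ER) {} {u})"
proof -
  define \<sigma> where "\<sigma> x = (if x = u then v else x)" for x
  have e1: "upd (V,EL,ER) {} {v} = (V - {v}, eminus EL {v}, eplus ER {v})" by (simp add: upd_simp)
  have e2: "upd (V,EL,ER) {} {u} = (V - {u}, eminus EL {u}, eplus ER {u})" by (simp add: upd_simp)
  have c: "card (V - {u}) = card (V - {v})" using fin uV vV by simp
  have "val (card (V - {v})) p (V - {v}, eminus EL {v}, eplus ER {v})
      \<le> val (card (V - {v})) p (V - {u}, eminus EL {u}, eplus ER {u})"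
  proof (rule dom_val[where \<sigma>=\<sigma>])
    show "bij_betw \<sigma> (V - {v}) (V - {u})"
      unfolding bij_betw_def
    proof
      show "inj_on \<sigma> (V - {v})" unfolding inj_on_def \<sigma>_def by auto
      show "\<sigma> ` (V - {v}) = V - {u}"
      proof
        show "\<sigma> ` (V - {v}) \<subseteq> V - {u}" using vV uv by (auto simp: \<sigma>_def)
        show "V - {u} \<subseteq> \<sigma> ` (V - {v})"
        proof
          fix y assume y: "y \<in> V - {u}"
          show "y \<in> \<sigma> ` (V - {v})"
          proof (cases "y = v")
            case True
            then have "y = \<sigma> u" by (simp add: \<sigma>_def)
            then show ?thesis using uV uv by auto
          next
            case False
            then have "y = \<sigma> y" using y by (simp add: \<sigma>_def)
            then show ?thesis using y False by blast
          qed
        qed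
      qed
    qed
    show "finite (V - {v})" using fin by simp
    show "\<forall>e\<in>eplus ER {v}. e \<noteq> {} \<and> e \<subseteq> V - {v}"
    proof
      fix e assume "e \<in> eplus ER {v}"
      then obtain e0 where "e0 \<in> ER" "e = e0 - {v}" by (auto simp: mem_eplus)
      moreover have "e0 \<noteq> {v}" using vR calculation by auto
      ultimately show "e \<noteq> {} \<and> e \<subseteq> V - {v}" using rd by blast
    qed
    show "\<forall>e\<in>eminus EL {v}. e \<noteq> {} \<and> e \<subseteq> V - {v}" using bl unfolding eminus_def by blast
    show "\<forall>e\<in>eplus ER {u}. e \<noteq> {}"
    proof
      fix e assume "e \<in> eplus ER {u}"
      then obtain e0 where "e0 \<in> ER" "e = e0 - {u}" by (auto simp: mem_eplus)
      moreover have "e0 \<noteq> {u}" using uR calculation by auto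
      ultimately show "e \<noteq> {}" using rd by blast
    qed
    show "\<forall>e\<in>eminus EL {u}. e \<noteq> {}" using bl unfolding eminus_def by blast
    show "\<forall>e\<in>eminus EL {v}. \<exists>e'\<in>eminus EL {u}. e' \<subseteq> \<sigma> ` e"
    proof
      fix e assume "e \<in> eminus EL {v}"
      then have e: "e \<in> EL" "v \<notin> e" by (auto simp: mem_eminus)
      then have "u \<notin> e" using imp by blast
      then have "e \<in> eminus EL {u}" using e by (simp add: mem_eminus)
      moreover have "e \<subseteq> \<sigma> ` e"
      proof
        fix y assume "y \<in> e"
        then have "y = \<sigma> y" using \<open>u \<notin> e\<close> by (auto simp: \<sigma>_def)
        then show "y \<in> \<sigma> ` e" using \<open>y \<in> e\<close> by blast
      qed
      ultimately show "\<exists>e'\<in>eminus EL {u}. e' \<subseteq> \<sigma> ` e" by blast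
    qed
    show "\<forall>f'\<in>eplus ER {u}. \<exists>f\<in>eplus ER {v}. \<sigma> ` f \<subseteq> f'"
    proof
      fix f' assume "f' \<in> eplus ER {u}"
      then obtain f0 where f0: "f0 \<in> ER" "f' = f0 - {u}" by (auto simp: mem_eplus)
      have "\<sigma> ` (f0 - {v}) \<subseteq> f'"
      proof
        fix z assume "z \<in> \<sigma> ` (f0 - {v})"
        then obtain y where y: "y \<in> f0" "y \<noteq> v" "z = \<sigma> y" by auto
        show "z \<in> f'"
        proof (cases "y = u")
          case True
          then have "v \<in> f0" using imp f0 y by blast
          then show ?thesis using y True f0 uv by (simp add: \<sigma>_def)
        next
          case False
          then show ?thesis using y f0 by (simp add: \<sigma>_def)
        qed
      qed
      moreover have "f0 - {v} \<in> eplus ER {v}" using f0 by (auto simp: mem_eplus)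
      ultimately show "\<exists>f\<in>eplus ER {v}. \<sigma> ` f \<subseteq> f'" by blast
    qed
  qed
  then show ?thesis unfolding e1 e2 w_def fst_conv c .
qed

lemma outcome_w: "outcome G = (w True G, w False G)"
  by (simp add: outcome_def w_def)

theorem lemma8:
  fixes V :: "'a set" and EL ER :: "'a set set" and u v :: 'a
  assumes "achievement_game (V, EL, ER)"
    and "u \<in> V" and "v \<in> V"
    and "{u} \<notin> EL \<union> ER" and "{v} \<notin> EL \<union> ER"
    and "\<forall>e \<in> EL \<union> ER. u \<in> e \<longrightarrow> v \<in> e"
  shows "le_L (outcome (upd (V, EL, ER) {u} {})) (outcome (upd (V, EL, ER) {v} {}))
       \<and> le_L (outcome (upd (V, EL, ER) {} {v})) (outcome (upd (V, EL, ER) {} {u}))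
       \<and> (u \<noteq> v \<longrightarrow> le_L (outcome (upd (V, EL, ER) {u} {v})) (outcome (V, EL, ER))
                     \<and> le_L (outcome (V, EL, ER)) (outcome (upd (V, EL, ER) {v} {u})))"
proof -
  have fin: "finite V" and bl: "\<forall>e\<in>EL. e \<noteq> {} \<and> e \<subseteq> V" and rd: "\<forall>e\<in>ER. e \<noteq> {} \<and> e \<subseteq> V"
    using assms(1) by (auto simp: achievement_game_def hypergraph_def)
  have uL: "{u} \<notin> EL" and uR: "{u} \<notin> ER" and vL: "{v} \<notin> EL" and vR: "{v} \<notin> ER"
    using assms(4,5) by auto
  note imp = assms(6) and uV = assms(2) and vV = assms(3)
  have P1: "le_L (outcome (upd (V, EL, ER) {u} {})) (outcome (upd (V, EL, ER) {v} {}))"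
  proof (cases "u = v")
    case True then show ?thesis by (simp add: le_L_def)
  next
    case False
    then show ?thesis unfolding le_L_def outcome_w fst_conv snd_conv
      using dom_i[OF fin bl rd False uV vV imp uL vL] by blast
  qed
  have P2: "le_L (outcome (upd (V, EL, ER) {} {v})) (outcome (upd (V, EL, ER) {} {u}))"
  proof (cases "u = v")
    case True then show ?thesis by (simp add: le_L_def)
  next
    case False
    then show ?thesis unfolding le_L_def outcome_w fst_conv snd_conv
      using dom_ii[OF fin bl rd False uV vV imp uR vR] by blast
  qed
  have P3: "le_L (outcome (upd (V, EL, ER) {u} {v})) (outcome (V, EL, ER))
          \<and> le_L (outcome (V, EL, ER)) (outcome (upd (V, EL, ER) {v} {u}))" if uv: "u \<noteq> v"
  proof
    show "le_L (outcome (upd (V, EL, ER) {u} {v})) (outcome (V, EL, ER))"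
      unfolding le_L_def outcome_w fst_conv snd_conv
      using iii[OF fin bl rd uv uV vV imp vR] by blast
    have imp': "\<forall>e\<in>ER \<union> EL. u \<in> e \<longrightarrow> v \<in> e" using imp by blast
    have flip: "upd (V,EL,ER) {v} {u} = (V - {u,v}, eminus (eplus EL {v}) {u}, eminus (eplus ER {u}) {v})"
      "upd (V,ER,EL) {u} {v} = (V - {u,v}, eminus (eplus ER {u}) {v}, eminus (eplus EL {v}) {u})"
      by (auto simp: upd_simp)
    have fin': "finite (V - {u,v})" using fin by simp
    have "w q (V,EL,ER) \<le> w q (upd (V,EL,ER) {v} {u})" for q
    proof -
      have "w (\<not>q) (upd (V,ER,EL) {u} {v}) \<le> w (\<not>q) (V,ER,EL)"
        using iii[OF fin rd bl uv uV vV imp' vL] .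
      then have "rrev (w (\<not>q) (V,ER,EL)) \<le> rrev (w (\<not>q) (upd (V,ER,EL) {u} {v}))"
        by (simp add: rrev_le)
      then show ?thesis
        unfolding w_flip[OF fin, of q EL ER] flip(1) w_flip[OF fin', of q] flip(2)[symmetric] .
    qed
    then show "le_L (outcome (V, EL, ER)) (outcome (upd (V, EL, ER) {v} {u}))"
      unfolding le_L_def outcome_w fst_conv snd_conv by blast
  qed
  show ?thesis using P1 P2 P3 by blast
qed

end
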